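(* For all $G,H\subseteq A$ and every $\varphi\in\mathcal{L}_{CoRGAL}$, the formula $\langle[G]\rangle\langle[H]\rangle\varphi\rightarrow[\langle A\setminus(G\cup H)\rangle]\varphi$ is valid.
   Context: Fix a finite set $A$ of agents and a countable set $P$ of propositional variables. The language $\mathcal{L}_{CoRGAL}$ is given by $\varphi ::= p \mid \neg\varphi \mid (\varphi\wedge\varphi) \mid K_a\varphi \mid [\varphi]\varphi \mid [G,\varphi]\varphi \mid [\langle G\rangle]\varphi$ with $p\in P$, $a\in A$, $G\subseteq A$. $\mathcal{L}_{EL}$ is the fragment built only from $p,\neg,\wedge,K_a$. Duals: $\langle\psi\rangle\varphi:=\neg[\psi]\neg\varphi$, $\langle[G]\rangle\varphi:=\neg[\langle G\rangle]\neg\varphi$. For $G\subseteq A$, $\mathcal{L}^G_{EL}$ is the set of formulas $\bigwedge_{i\in G}K_i\varphi_i$ with each $\varphi_i\in\mathcal{L}_{EL}$; $\psi_G,\chi_G$ range over $\mathcal{L}^G_{EL}$. Epistemic models $M=(W,\sim,V)$: $W\neq\emptyset$, each $\sim_a$ an equivalence relation, $V:P\to\mathcal{P}(W)$; $M^\varphi$ is the restriction of $M$ to $\{v:(M,v)\models\varphi\}$. Semantics: standard for $p,\neg,\wedge,K_a$; $(M,w)\models[\varphi]\psi$ iff $(M,w)\models\varphi$ implies $(M^\varphi,w)\models\psi$; $(M,w)\models[G,\chi]\varphi$ iff $(M,w)\models\chi$ and for all $\psi_G$, $(M,w)\models[\psi_G\wedge\chi]\varphi$; $(M,w)\models[\langle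 G\rangle]\varphi$ iff for every $\psi_G$ there is $\chi_{A\setminus G}$ with $(M,w)\models\psi_G\to\langle\psi_G\wedge\chi_{A\setminus G}\rangle\varphi$. Thus $(M,w)\models\langle[G]\rangle\varphi$ iff there is $\psi_G$ such that for all $\chi_{A\setminus G}$, $(M,w)\models\psi_G\wedge[\psi_G\wedge\chi_{A\setminus G}]\varphi$. A formula is valid if true at every pointed model. *)

theory Defs
  imports Main "HOL-Library.Countable"
begin

text \<open>Syntax of CoRGAL. Agents: a finite type 'a (A = UNIV); propositional
variables: a countable type 'p.\<close>

datatype ('a, 'p) form =
    Atom 'p
  | Neg "('a, 'p) form"
  | Conj "('a, 'p) form" "('a, 'p) form"
  | K 'a "('a, 'p) form"
  | Ann "('a, 'p) form" "('a, 'p) form"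
  | GAnn "'a set" "('a, 'p) form" "('a, 'p) form"
  | Coal "'a set" "('a, 'p) form"

primrec is_EL :: "('a, 'p) form \<Rightarrow> bool" where
  "is_EL (Atom p) = True"
| "is_EL (Neg f) = is_EL f"
| "is_EL (Conj f g) = (is_EL f \<and> is_EL g)"
| "is_EL (K a f) = is_EL f"
| "is_EL (Ann f g) = False"
| "is_EL (GAnn G f g) = False"
| "is_EL (Coal G f) = False"

record ('w, 'a, 'p) emodel =
  W :: "'w set"
  Rel :: "'a \<Rightarrow> ('w \<times> 'w) set"
  Val :: "'p \<Rightarrow> 'w set"

definition is_model :: "('w, 'a, 'p) emodel \<Rightarrow> bool" where
  "is_model M \<longleftrightarrow> W M \<noteq> {} \<and> (\<forall>a. equiv (W M) (Rel M a)) \<and> (\<forall>p. Val M p \<subseteq> W M)"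

definition restrict_model :: "('w, 'a, 'p) emodel \<Rightarrow> 'w set \<Rightarrow> ('w, 'a, 'p) emodel" where
  "restrict_model M S =
     \<lparr> W = W M \<inter> S,
       Rel = (\<lambda>a. Rel M a \<inter> ((W M \<inter> S) \<times> (W M \<inter> S))),
       Val = (\<lambda>p. Val M p \<inter> (W M \<inter> S)) \<rparr>"

primrec sat_el :: "('a, 'p) form \<Rightarrow> ('w, 'a, 'p) emodel \<Rightarrow> 'w \<Rightarrow> bool" where
  "sat_el (Atom p) M w = (w \<in> Val M p)"
| "sat_el (Neg f) M w = (\<not> sat_el f M w)"
| "sat_el (Conj f g) M w = (sat_el f M w \<and> sat_el g M w)"
| "sat_el (K a f) M w = (\<forall>v\<in>W M. (w, v) \<in> Rel M a \<longrightarrow> sat_el f M v)"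
| "sat_el (Ann f g) M w = False"
| "sat_el (GAnn G f g) M w = False"
| "sat_el (Coal G f) M w = False"

text \<open>A formula psi_G in L^G_EL, i.e. the conjunction over i in G of K_i (f i) with each
f i epistemic, is represented by the function f; its truth value at (M,w) is
the (finite) conjunction below (the empty conjunction for G = {} is true).\<close>
definition EL_fam :: "'a set \<Rightarrow> ('a \<Rightarrow> ('a, 'p) form) \<Rightarrow> bool" where
  "EL_fam G f \<longleftrightarrow> (\<forall>i\<in>G. is_EL (f i))"

definition sat_G :: "'a set \<Rightarrow> ('a \<Rightarrow> ('a, 'p) form) \<Rightarrow> ('w, 'a, 'p) emodel \<Rightarrow> 'w \<Rightarrow> bool" where
  "sat_G G f M w \<longleftrightarrow> (\<forall>i\<in>G. sat_el (K i (f i)) M w)"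

primrec sat :: "('a::finite, 'p) form \<Rightarrow> ('w, 'a, 'p) emodel \<Rightarrow> 'w \<Rightarrow> bool" where
  "sat (Atom p) M w = (w \<in> Val M p)"
| "sat (Neg f) M w = (\<not> sat f M w)"
| "sat (Conj f g) M w = (sat f M w \<and> sat g M w)"
| "sat (K a f) M w = (\<forall>v\<in>W M. (w, v) \<in> Rel M a \<longrightarrow> sat f M v)"
| "sat (Ann f g) M w =
     (sat f M w \<longrightarrow> sat g (restrict_model M {v \<in> W M. sat f M v}) w)"
| "sat (GAnn G chi f) M w =
     (sat chi M w \<and>
      (\<forall>psi. EL_fam G psi \<longrightarrow>
         ((sat_G G psi M w \<and> sat chi M w) \<longrightarrow>
          sat f (restrict_model M {v \<in> W M. sat_G G psi M v \<and> sat chi M v}) w)))"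
| "sat (Coal G f) M w =
     (\<forall>psi. EL_fam G psi \<longrightarrow>
        (\<exists>chi. EL_fam (- G) chi \<and>
           (sat_G G psi M w \<longrightarrow>
              (sat_G G psi M w \<and> sat_G (- G) chi M w \<and>
               sat f (restrict_model M {v \<in> W M. sat_G G psi M v \<and> sat_G (- G) chi M v}) w))))"

definition Imp :: "('a, 'p) form \<Rightarrow> ('a, 'p) form \<Rightarrow> ('a, 'p) form" where
  "Imp f g = Neg (Conj f (Neg g))"

definition CoalDia :: "'a set \<Rightarrow> ('a, 'p) form \<Rightarrow> ('a, 'p) form" where
  "CoalDia G f = Neg (Coal G (Neg f))"

definition valid :: "('a::finite, 'p) form \<Rightarrow> 'w itself \<Rightarrow> bool" where
  "valid f (_ :: 'w itself) \<longleftrightarrow>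
     (\<forall>(M :: ('w, 'a, 'p) emodel) w. is_model M \<and> w \<in> W M \<longrightarrow> sat f M w)"

end

theory Submission
  imports Defs
begin

definition tt :: "('a, 'p) form" where
  "tt = Neg (Conj (Atom undefined) (Neg (Atom undefined)))"

lemma tt_sem[simp]: "sat_el tt M v" and tt_EL[simp]: "is_EL tt"
  by (auto simp: tt_def)

lemma Ktt[simp]: "sat_el (K i tt) M v"
  by simp

primrec conjs :: "('a, 'p) form list \<Rightarrow> ('a, 'p) form" where
  "conjs [] = tt"
| "conjs (f # fs) = Conj f (conjs fs)"

lemma conjs_sem: "sat_el (conjs fs) M v \<longleftrightarrow> (\<forall>f\<in>set fs. sat_el f M v)"
  by (induction fs) auto

lemma conjs_EL: "(\<forall>f\<in>set fs. is_EL f) \<Longrightarrow> is_EL (conjs fs)"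
  by (induction fs) auto

primrec rel :: "('a, 'p) form \<Rightarrow> ('a, 'p) form \<Rightarrow> ('a, 'p) form" where
  "rel s (Atom p) = Atom p"
| "rel s (Neg f) = Neg (rel s f)"
| "rel s (Conj f g) = Conj (rel s f) (rel s g)"
| "rel s (K a f) = K a (Imp s (rel s f))"
| "rel s (Ann f g) = Ann f g"
| "rel s (GAnn G f g) = GAnn G f g"
| "rel s (Coal G f) = Coal G f"

lemma rel_EL: "is_EL s \<Longrightarrow> is_EL f \<Longrightarrow> is_EL (rel s f)"
  by (induction f) (auto simp: Imp_def)

lemma rel_sem:
  assumes "is_EL f" "\<forall>u\<in>W M. sat_el s M u \<longleftrightarrow> u \<in> T"
  shows "v \<in> W M \<Longrightarrow> v \<in> T \<Longrightarrow> sat_el f (restrict_model M T) v \<longleftrightarrow> sat_el (rel s f) M v"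
  using assms(1)
proof (induction f arbitrary: v)
  case (K a f)
  then show ?case using assms(2)
    by (auto simp: restrict_model_def Imp_def)
qed (auto simp: restrict_model_def)

lemma restrict_restrict:
  "restrict_model (restrict_model M S) T = restrict_model M (S \<inter> T)"
  by (auto simp: restrict_model_def)

lemma restrict_cong:
  "W M \<inter> A = W M \<inter> B \<Longrightarrow> restrict_model M A = restrict_model M B"
  by (simp add: restrict_model_def)

theorem mainTheorem6:
  fixes G H :: "'a::finite set" and phi :: "('a, 'p::countable) form"
  shows "valid (Imp (CoalDia G (CoalDia H phi)) (Coal (- (G \<union> H)) phi)) TYPE('w)"
  unfolding valid_def
proof (intro allI impI)
  fix M :: "('w, 'a, 'p) emodel" and w
  assume "is_model M \<and> w \<in> W M"
  hence wW: "w \<in> W M" by simp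
  let ?C = "- (G \<union> H)"
  show "sat (Imp (CoalDia G (CoalDia H phi)) (Coal ?C phi)) M w"
    unfolding Imp_def CoalDia_def
  proof (rule ccontr)
    assume nc: "\<not> sat (Neg (Conj (Neg (Coal G (Neg (Neg (Coal H (Neg phi)))))) (Neg (Coal ?C phi)))) M w"
    have A: "sat (Neg (Coal G (Neg (Neg (Coal H (Neg phi)))))) M w"
      and B: "\<not> sat (Coal ?C phi) M w"
      using nc by (simp_all only: sat.simps simp_thms)
    from B obtain psi' where el': "EL_fam ?C psi'"
      and B': "\<And>chi. EL_fam (- ?C) chi \<Longrightarrow> sat_G ?C psi' M w \<and>
          \<not> (sat_G ?C psi' M w \<and> sat_G (- ?C) chi M w \<and>
           sat phi (restrict_model M {v \<in> W M. sat_G ?C psi' M v \<and> sat_G (- ?C) chi M v}) w)"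
      by (auto simp del: Compl_Un)
    have p'w: "sat_G ?C psi' M w" using B'[of "\<lambda>_. tt"] by (auto simp: EL_fam_def)
    from A obtain psiG where elG: "EL_fam G psiG"
      and A': "\<And>chi. EL_fam (- G) chi \<Longrightarrow> sat_G G psiG M w \<and>
          (sat_G (- G) chi M w \<longrightarrow> sat (Coal H (Neg phi))
             (restrict_model M {v \<in> W M. sat_G G psiG M v \<and> sat_G (- G) chi M v}) w = False)"
      by auto
    define chi where "chi = (\<lambda>i. if i \<in> ?C then psi' i else tt)"
    have elchi: "EL_fam (- G) chi" using el' by (auto simp: EL_fam_def chi_def)
    have chi_iff: "sat_G (- G) chi M v \<longleftrightarrow> sat_G ?C psi' M v" for v
    proof -
      have "sat_el (K i (chi i)) M v \<longleftrightarrow> (i \<in> ?C \<longrightarrow> sat_el (K i (psi' i)) M v)" for i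
        by (cases "i \<in> ?C") (simp_all only: chi_def if_True if_False Ktt simp_thms)
      thus ?thesis unfolding sat_G_def by (auto simp del: sat_el.simps Compl_Un)
    qed
    define S where "S = {v \<in> W M. sat_G G psiG M v \<and> sat_G (- G) chi M v}"
    define M1 where "M1 = restrict_model M S"
    have pGw: "sat_G G psiG M w" using A'[OF elchi] by simp
    have wS: "w \<in> S" using pGw p'w wW chi_iff by (simp add: S_def)
    have "\<not> sat (Coal H (Neg phi)) M1 w" using A'[OF elchi] pGw p'w chi_iff
      by (simp add: M1_def S_def)
    then obtain psiH where elH: "EL_fam H psiH"
      and A2: "\<And>chi2. EL_fam (- H) chi2 \<Longrightarrow> sat_G H psiH M1 w \<and>
          (sat_G (- H) chi2 M1 w \<longrightarrow>
             sat phi (restrict_model M1 {v \<in> W M1. sat_G H psiH M1 v \<and> sat_G (- H) chi2 M1 v}) w)"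
      by auto
    have A3: "sat_G H psiH M1 w \<and>
             sat phi (restrict_model M1 {v \<in> W M1. sat_G H psiH M1 v}) w"
      using A2[of "\<lambda>_. tt"] by (auto simp: EL_fam_def sat_G_def)
    define g where "g = (\<lambda>i. if i \<in> G then psiG i else chi i)"
    obtain xs where xs: "set xs = (UNIV :: 'a set)" using finite_list[OF finite_UNIV] by blast
    define s where "s = conjs (map (\<lambda>i. K i (g i)) xs)"
    have sEL: "is_EL s" unfolding s_def
      using elG elchi by (intro conjs_EL) (auto simp: g_def EL_fam_def)
    have s_sem: "\<forall>u\<in>W M. sat_el s M u \<longleftrightarrow> u \<in> S"
    proof
      fix u assume "u \<in> W M"
      have "sat_el s M u \<longleftrightarrow> (\<forall>i. sat_el (K i (g i)) M u)"
        unfolding s_def conjs_sem using xs by auto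
      also have "\<dots> \<longleftrightarrow> sat_G G psiG M u \<and> sat_G (- G) chi M u"
        unfolding sat_G_def g_def by (auto simp del: sat_el.simps)
      finally show "sat_el s M u \<longleftrightarrow> u \<in> S" using \<open>u \<in> W M\<close> by (simp add: S_def)
    qed
    define chi' where "chi' = (\<lambda>i. Conj (if i \<in> G then psiG i else tt)
                                       (if i \<in> H then Imp s (rel s (psiH i)) else tt))"
    have elchi': "EL_fam (- ?C) chi'"
      using elG elH sEL by (auto simp: EL_fam_def chi'_def Imp_def rel_EL)
    have keyH: "v \<in> S \<Longrightarrow> sat_G H psiH M1 v \<longleftrightarrow>
         (\<forall>i\<in>H. sat_el (K i (Imp s (rel s (psiH i)))) M v)" for v
    proof -
      assume vS: "v \<in> S"
      hence vW: "v \<in> W M" by (simp add: S_def)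
      have "sat_el (K i (psiH i)) M1 v \<longleftrightarrow> sat_el (rel s (K i (psiH i))) M v" if "i \<in> H" for i
        unfolding M1_def
        using rel_sem[of "K i (psiH i)" M s S v] elH that vS vW s_sem
        by (auto simp: EL_fam_def simp del: sat_el.simps rel.simps)
      thus ?thesis by (simp add: sat_G_def del: sat_el.simps)
    qed
    have chi'_iff: "sat_G (- ?C) chi' M v \<longleftrightarrow>
        sat_G G psiG M v \<and> (\<forall>i\<in>H. sat_el (K i (Imp s (rel s (psiH i)))) M v)" for v
      unfolding sat_G_def chi'_def by (auto simp del: Imp_def)
    have c'w: "sat_G (- ?C) chi' M w" using chi'_iff pGw keyH wS A3 by simp
    have eqM: "restrict_model M1 {v \<in> W M1. sat_G H psiH M1 v} =
        restrict_model M {v \<in> W M. sat_G ?C psi' M v \<and> sat_G (- ?C) chi' M v}"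
      unfolding M1_def restrict_restrict
    proof (rule restrict_cong)
      show "W M \<inter> (S \<inter> {v \<in> W (restrict_model M S). sat_G H psiH (restrict_model M S) v}) =
          W M \<inter> {v \<in> W M. sat_G ?C psi' M v \<and> sat_G (- ?C) chi' M v}"
      proof (intro set_eqI iffI)
        fix v assume "v \<in> W M \<inter> (S \<inter> {v \<in> W (restrict_model M S). sat_G H psiH (restrict_model M S) v})"
        hence vS: "v \<in> S" and h: "sat_G H psiH M1 v" by (auto simp: M1_def)
        show "v \<in> W M \<inter> {v \<in> W M. sat_G ?C psi' M v \<and> sat_G (- ?C) chi' M v}"
          using vS h keyH[OF vS] chi'_iff[of v] chi_iff[of v] by (auto simp: S_def simp del: Compl_Un)
      next
        fix v assume "v \<in> W M \<inter> {v \<in> W M. sat_G ?C psi' M v \<and> sat_G (- ?C) chi' M v}"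
        hence vW: "v \<in> W M" and p: "sat_G ?C psi' M v" and c: "sat_G (- ?C) chi' M v" by auto
        have vS: "v \<in> S" using vW p c chi'_iff[of v] chi_iff[of v] by (simp add: S_def)
        have "sat_G H psiH M1 v" using keyH[OF vS] c chi'_iff[of v] by simp
        thus "v \<in> W M \<inter> (S \<inter> {v \<in> W (restrict_model M S). sat_G H psiH (restrict_model M S) v})"
          using vS vW by (auto simp: M1_def restrict_model_def)
      qed
    qed
    have "sat phi (restrict_model M {v \<in> W M. sat_G ?C psi' M v \<and> sat_G (- ?C) chi' M v}) w"
      using A3 eqM by simp
    thus False using B'[OF elchi'] p'w c'w by blast
  qed
qed

end
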